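(* Let $p$ be an odd prime, $a,m\in\mathbb Z_p$ with $a\not\equiv0,-1\pmod p$ and $m\not\equiv0\pmod p$, and put $A_k=\binom ak\binom{-1-a}k\binom{2k}k$. Then $$\frac{m-4}2\sum_{k=0}^{p-1}\frac{k^2A_k}{m^k}\equiv\sum_{k=0}^{p-1}\frac{kA_k}{m^k}-2a(a+1)\sum_{k=0}^{p-1}\frac{A_k}{m^k}+a(a+1)\sum_{k=0}^{p-2}\frac{A_k}{m^k(k+1)}\pmod{p^3},$$ $$\frac{m-4}2\sum_{k=0}^{p-1}\frac{k^3A_k}{m^k}\equiv3\sum_{k=0}^{p-1}\frac{k^2A_k}{m^k}-(2a(a+1)-1)\sum_{k=0}^{p-1}\frac{kA_k}{m^k}-a(a+1)\sum_{k=0}^{p-1}\frac{A_k}{m^k}\pmod{p^3}.$$ Consequently, if moreover $m\not\equiv 4\pmod p$, then $$\sum_{k=0}^{p-1}\frac{k^3A_k}{m^k}\equiv\frac{(2-4a(a+1))(m-4)+12}{(m-4)^2}\sum_{k=0}^{p-1}\frac{kA_k}{m^k}-\frac{2a(a+1)(m+8)}{(m-4)^2}\sum_{k=0}^{p-1}\frac{A_k}{m^k}+\frac{12a(a+1)}{(m-4)^2}\sum_{k=0}^{p-2}\frac{A_k}{m^k(k+1)}\pmod{p^3}.$$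
   Context: $\mathbb Z_p$ denotes the set of rational numbers whose denominator is not divisible by $p$; for $u,v\in\mathbb Z_p$, $u\equiv v\pmod{p^r}$ means $(u-v)/p^r\in\mathbb Z_p$. For $a$ rational, $\binom a0=1$ and $\binom ak=\frac{a(a-1)\cdots(a-k+1)}{k!}$ for $k\ge1$. *)

theory Defs
  imports Complex_Main "HOL-Computational_Algebra.Primes"
begin

definition p_integral :: "nat \<Rightarrow> rat \<Rightarrow> bool" where
  "p_integral p x \<longleftrightarrow> \<not> (int p dvd snd (quotient_of x))"

definition qcong :: "nat \<Rightarrow> nat \<Rightarrow> rat \<Rightarrow> rat \<Rightarrow> bool" where
  "qcong p r u v \<longleftrightarrow> p_integral p ((u - v) / (of_nat p) ^ r)"

definition A :: "rat \<Rightarrow> nat \<Rightarrow> rat" where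
  "A a k = (a gchoose k) * ((-1 - a) gchoose k) * of_nat ((2 * k) choose k)"

end

theory Submission
  imports Defs
begin


lemma pint_iff:
  assumes "prime p"
  shows "p_integral p x \<longleftrightarrow> (\<exists>n d. x = of_int n / of_int d \<and> \<not> int p dvd d)"
proof
  assume "p_integral p x"
  obtain n d where q: "quotient_of x = (n, d)" by (cases "quotient_of x")
  show "\<exists>n d. x = of_int n / of_int d \<and> \<not> int p dvd d"
    using quotient_of_div[OF q] \<open>p_integral p x\<close> q unfolding p_integral_def by auto
next
  assume "\<exists>n d. x = of_int n / of_int d \<and> \<not> int p dvd d"
  then obtain n d where x: "x = of_int n / of_int d" and nd: "\<not> int p dvd d" by blast
  have d0: "d \<noteq> 0" using nd by auto
  obtain n' d' where q: "quotient_of x = (n', d')" by (cases "quotient_of x")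
  have x': "x = of_int n' / of_int d'" using quotient_of_div[OF q] .
  have d'0: "d' > 0" using quotient_of_denom_pos[OF q] .
  have cop: "coprime n' d'" using quotient_of_coprime[OF q] .
  have "(of_int n' :: rat) * of_int d = of_int n * of_int d'"
    using x x' d0 d'0 by (simp add: field_simps)
  hence e: "n' * d = n * d'" by (metis of_int_eq_iff of_int_mult)
  have "d' dvd n' * d" unfolding e by simp
  hence "d' dvd d" using cop by (metis coprime_commute coprime_dvd_mult_right_iff)
  hence "\<not> int p dvd d'" using nd by (meson dvd_trans)
  thus "p_integral p x" unfolding p_integral_def q by simp
qed

lemma pint_add:
  assumes "prime p" "p_integral p x" "p_integral p y" shows "p_integral p (x + y)"
proof -
  obtain n d where x: "x = of_int n / of_int d" and d: "\<not> int p dvd d" using assms pint_iff by blast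
  obtain n' d' where y: "y = of_int n' / of_int d'" and d': "\<not> int p dvd d'" using assms pint_iff by blast
  have "d \<noteq> 0" "d' \<noteq> 0" using d d' by auto
  hence "x + y = of_int (n * d' + n' * d) / of_int (d * d')" using x y by (simp add: field_simps)
  moreover have "\<not> int p dvd d * d'" using d d' assms(1)
    by (simp add: prime_dvd_mult_iff)
  ultimately show ?thesis using pint_iff[OF assms(1)] by blast
qed

lemma pint_mult:
  assumes "prime p" "p_integral p x" "p_integral p y" shows "p_integral p (x * y)"
proof -
  obtain n d where x: "x = of_int n / of_int d" and d: "\<not> int p dvd d" using assms pint_iff by blast
  obtain n' d' where y: "y = of_int n' / of_int d'" and d': "\<not> int p dvd d'" using assms pint_iff by blast
  have "x * y = of_int (n * n') / of_int (d * d')" using x y by simp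
  moreover have "\<not> int p dvd d * d'" using d d' assms(1)
    by (simp add: prime_dvd_mult_iff)
  ultimately show ?thesis using pint_iff[OF assms(1)] by blast
qed

lemma pint_int: assumes "prime p" shows "p_integral p (of_int n)"
proof -
  have "\<not> int p dvd 1" using assms prime_gt_1_nat[OF assms] by simp
  moreover have "(of_int n :: rat) = of_int n / of_int 1" by simp
  ultimately show ?thesis using pint_iff[OF assms] by blast
qed

lemma pint_nat: assumes "prime p" shows "p_integral p (of_nat n)"
  using pint_int[OF assms, of "int n"] by simp

lemma pint_uminus: assumes "prime p" "p_integral p x" shows "p_integral p (- x)"
  using pint_mult[OF assms(1) pint_int[OF assms(1), of "-1"] assms(2)] by simp

lemma pint_diff: assumes "prime p" "p_integral p x" "p_integral p y" shows "p_integral p (x - y)"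
  using pint_add[OF assms(1,2) pint_uminus[OF assms(1,3)]] by simp

lemma pint_power: assumes "prime p" "p_integral p x" shows "p_integral p (x ^ k)"
  by (induction k) (simp_all add: pint_mult[OF assms(1)] pint_int[OF assms(1), of 1, simplified] assms(2))

lemma pint_inverse:
  assumes "prime p" "p_integral p x" "\<not> p_integral p (x / of_nat p)"
  shows "p_integral p (inverse x)"
proof -
  obtain n d where x: "x = of_int n / of_int d" and d: "\<not> int p dvd d" using assms pint_iff by blast
  have pn: "\<not> int p dvd n"
  proof
    assume "int p dvd n"
    then obtain t where "n = int p * t" by blast
    hence "x / of_nat p = of_int t / of_int d" using x assms(1)
      by (simp add: field_simps prime_gt_0_nat)
    thus False using assms(3) d pint_iff[OF assms(1)] by blast
  qed
  have "inverse x = of_int d / of_int n" using x by simp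
  thus ?thesis using pn pint_iff[OF assms(1)] by blast
qed

lemma pint_divide:
  assumes "prime p" "p_integral p x" "p_integral p y" "\<not> p_integral p (y / of_nat p)"
  shows "p_integral p (x / y)"
  using pint_mult[OF assms(1,2) pint_inverse[OF assms(1,3,4)]] by (simp add: divide_inverse)

lemma pint_shift:
  assumes "prime p" "p_integral p a"
  shows "\<exists>j<p. p_integral p ((a - of_nat j) / of_nat p)"
proof -
  obtain n d where x: "a = of_int n / of_int d" and d: "\<not> int p dvd d" using assms pint_iff by blast
  have "coprime (int p) d" using d assms(1)
    by (simp add: prime_imp_coprime_int prime_nat_int_transfer)
  then obtain u v where uv: "u * int p + v * d = 1" using bezout_int[of "int p" d] by auto
  define j where "j = nat ((n * v) mod int p)"
  have p0: "int p > 0" using assms(1) prime_gt_0_nat by simp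
  have jp: "j < p" unfolding j_def using p0
    by (simp add: nat_less_iff)
  have jm: "int j = (n * v) mod int p" unfolding j_def using p0 by simp
  have "int p dvd (n - int j * d)"
  proof -
    have "n - int j * d = n * (u * int p + v * d) - int j * d" using uv by simp
    also have "\<dots> = int p * (n * u) + (n * v - int j) * d" by (simp add: algebra_simps)
    finally have e: "n - int j * d = int p * (n * u) + (n * v - int j) * d" .
    have "int p dvd (n * v - int j)" unfolding jm by (simp add: mod_0_imp_dvd minus_mod_eq_mult_div[symmetric])
    thus ?thesis unfolding e by simp
  qed
  then obtain t where t: "n - int j * d = int p * t" by blast
  have d0: "d \<noteq> 0" using d by auto
  have "(a - of_nat j) / of_nat p = of_int t / of_int d"
  proof -
    have "(a - of_nat j) = of_int (n - int j * d) / of_int d" using x d0 by (simp add: field_simps)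
    also have "\<dots> = of_nat p * of_int t / of_int d" unfolding t by simp
    finally show ?thesis using p0 by (simp add: field_simps)
  qed
  thus ?thesis using jp d pint_iff[OF assms(1)] by blast
qed



lemma cb_rec: "(of_nat (Suc k)) * (of_nat ((2*Suc k) choose Suc k) :: rat) = (2*(2*of_nat k+1)) * of_nat ((2*k) choose k)"
proof -
  have e1: "2*Suc k - Suc k = Suc k" "2*k - k = k" by auto
  have e2: "2 * Suc k = Suc (Suc (2*k))" by simp
  have h1: "(of_nat ((2*Suc k) choose Suc k) :: rat) = fact (2*Suc k) / (fact (Suc k) * fact (Suc k))"
    using binomial_fact[of "Suc k" "2*Suc k", where 'a=rat] unfolding e1 by simp
  have h2: "(of_nat ((2*k) choose k) :: rat) = fact (2*k) / (fact k * fact k)"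
    using binomial_fact[of "k" "2*k", where 'a=rat] unfolding e1 by simp
  have h3: "(fact (2*Suc k) :: rat) = (2*of_nat k + 2) * (2 * of_nat k + 1) * fact (2*k)"
    unfolding e2 fact_Suc by (simp add: algebra_simps)
  have h4: "(fact (Suc k) :: rat) = (of_nat k + 1) * fact k" unfolding fact_Suc by simp
  have f0: "(fact k :: rat) \<noteq> 0" by simp
  have k0: "(of_nat k + 1 :: rat) \<noteq> 0" by (metis of_nat_Suc of_nat_eq_0_iff add.commute nat.distinct(1))
  have gen0: "\<And>F G x K::rat. K \<noteq> 0 \<Longrightarrow> F \<noteq> 0 \<Longrightarrow> K * ((2*K)*(2*x+1)*G / ((K*F)*(K*F))) = (2*(2*x+1))*(G/(F*F))"
    by (simp add: field_simps)
  have gen: "\<And>F G x::rat. x + 1 \<noteq> 0 \<Longrightarrow> F \<noteq> 0 \<Longrightarrow> (x+1) * ((2*x+2)*(2*x+1)*G / (((x+1)*F)*((x+1)*F))) = (2*(2*x+1))*(G/(F*F))"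
  proof -
    fix F G x :: rat assume "x + 1 \<noteq> 0" "F \<noteq> 0"
    have "2*x+2 = 2*(x+1)" by simp
    thus "(x+1) * ((2*x+2)*(2*x+1)*G / (((x+1)*F)*((x+1)*F))) = (2*(2*x+1))*(G/(F*F))"
      using gen0[OF \<open>x + 1 \<noteq> 0\<close> \<open>F \<noteq> 0\<close>, of x G] by simp
  qed
  have h5: "(of_nat (Suc k) :: rat) = of_nat k + 1" by simp
  show ?thesis unfolding h1 h2 h3 h4 h5 by (rule gen[OF k0 f0])
qed

lemma gch_rec: "of_nat (Suc k) * ((x::rat) gchoose Suc k) = (x - of_nat k) * (x gchoose k)"
  using gbinomial_mult_1[of x k] by (simp add: algebra_simps)

lemma A_rec: "(of_nat k + 1)^3 * A a (Suc k) = 2*(2*of_nat k+1)*((of_nat k)^2 + of_nat k - a*(a+1)) * A a k"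
proof -
  have "(of_nat k + 1)^3 * A a (Suc k) = (of_nat (Suc k) * (a gchoose Suc k)) * (of_nat (Suc k) * ((-1-a) gchoose Suc k))
     * ((of_nat (Suc k)) * of_nat ((2*Suc k) choose Suc k))"
    unfolding A_def by (simp add: algebra_simps power3_eq_cube)
  also have "\<dots> = ((a - of_nat k) * (a gchoose k)) * ((-1-a - of_nat k) * ((-1-a) gchoose k)) * ((2*(2*of_nat k+1)) * of_nat ((2*k) choose k))"
    by (simp only: gch_rec cb_rec)
  also have "\<dots> = (2*(2*of_nat k+1)*((of_nat k)^2 + of_nat k - a*(a+1)) * A a k)"
    unfolding A_def by (simp add: algebra_simps power2_eq_square)
  finally show ?thesis .
qed

lemma pint_prod: assumes "prime p" "finite S" "\<forall>i\<in>S. p_integral p (f i)" shows "p_integral p (prod f S)"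
  using assms(2,3)
proof (induction S rule: finite_induct)
  case empty then show ?case using pint_int[OF assms(1), of 1] by simp
next
  case (insert x F) then show ?case using pint_mult[OF assms(1)] by simp
qed

lemma pint_gch:
  assumes "prime p" "p_integral p x" "k < p" "j < k" "p_integral p ((x - of_nat j) / of_nat p)"
  shows "p_integral p ((x gchoose k) / of_nat p)"
proof -
  have jS: "j \<in> {0..<k}" using assms by simp
  have P: "(\<Prod>i=0..<k. x - of_nat i) = (x - of_nat j) * (\<Prod>i\<in>{0..<k}-{j}. x - of_nat i)"
    using prod.remove[OF _ jS] by simp
  have "p_integral p (\<Prod>i\<in>{0..<k}-{j}. x - of_nat i)"
    by (rule pint_prod[OF assms(1)]) (auto intro: pint_diff[OF assms(1) assms(2) pint_nat[OF assms(1)]])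
  hence P2: "p_integral p ((\<Prod>i=0..<k. x - of_nat i) / of_nat p)"
  proof -
    have "(\<Prod>i=0..<k. x - of_nat i) / of_nat p = ((x - of_nat j) / of_nat p) * (\<Prod>i\<in>{0..<k}-{j}. x - of_nat i)"
      unfolding P by simp
    thus ?thesis using pint_mult[OF assms(1) assms(5) \<open>p_integral p (\<Prod>i\<in>{0..<k}-{j}. x - of_nat i)\<close>] by (simp only:)
  qed
  have "\<not> p dvd fact k" using assms(1,3) prime_dvd_fact_iff[OF assms(1), of k] by simp
  hence nf: "\<not> int p dvd int (fact k)" by (metis int_dvd_int_iff)
  have "(1::rat) / of_nat (fact k) = of_int 1 / of_int (int (fact k))" by simp
  hence F: "p_integral p (1 / of_nat (fact k))" using nf pint_iff[OF assms(1)] by blast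
  have "(x gchoose k) / of_nat p = ((\<Prod>i=0..<k. x - of_nat i) / of_nat p) * (1 / of_nat (fact k))"
    by (simp add: gbinomial_prod_rev)
  thus ?thesis using pint_mult[OF assms(1) P2 F] by simp
qed

lemma central_dvd: assumes "prime p" shows "p dvd ((2*(p-1)) choose (p-1))"
proof -
  have p2: "p \<ge> 2" using prime_ge_2_nat[OF assms] .
  have "fact (p-1) * fact (2*(p-1) - (p-1)) * ((2*(p-1)) choose (p-1)) = (fact (2*(p-1)) :: nat)"
    using binomial_fact_lemma[of "p-1" "2*(p-1)"] by simp
  moreover have "p dvd (fact (2*(p-1)) :: nat)" using prime_dvd_fact_iff[OF assms] p2 by simp
  moreover have "\<not> p dvd (fact (p-1) :: nat)" using prime_dvd_fact_iff[OF assms] p2 by simp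
  moreover have "2*(p-1) - (p-1) = p - 1" by simp
  ultimately show ?thesis using assms by (metis prime_dvd_mult_iff)
qed

lemma A_div:
  assumes "prime p" "p_integral p a" "\<not> qcong p 1 a 0" "\<not> qcong p 1 a (-1)"
  shows "p_integral p (A a (p-1) / of_nat p ^ 3)"
proof -
  have p2: "p \<ge> 2" using prime_ge_2_nat[OF assms(1)] .
  have pp: "(of_nat p :: rat) \<noteq> 0" using p2 by simp
  obtain j where j: "j < p" "p_integral p ((a - of_nat j) / of_nat p)" using pint_shift[OF assms(1,2)] by blast
  have "j \<noteq> p - 1"
  proof
    assume "j = p - 1"
    hence "of_nat j = (of_nat p - 1 :: rat)" using p2 by (simp add: of_nat_diff)
    hence "(a - - 1) / of_nat p = (a - of_nat j) / of_nat p + 1" using pp by (simp add: field_simps)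
    hence "p_integral p ((a - - 1) / of_nat p ^ 1)" using pint_add[OF assms(1) j(2) pint_int[OF assms(1), of 1]] by simp
    thus False using assms(4) unfolding qcong_def by simp
  qed
  hence C1: "p_integral p ((a gchoose (p-1)) / of_nat p)" using pint_gch[OF assms(1,2), of "p-1" j] j p2 by simp
  have a2: "p_integral p (-1 - a)" using pint_diff[OF assms(1) pint_int[OF assms(1), of "-1"] assms(2)] by simp
  obtain j' where j': "j' < p" "p_integral p ((-1 - a - of_nat j') / of_nat p)" using pint_shift[OF assms(1) a2] by blast
  have "j' \<noteq> p - 1"
  proof
    assume "j' = p - 1"
    hence "of_nat j' = (of_nat p - 1 :: rat)" using p2 by (simp add: of_nat_diff)
    hence "(a - 0) / of_nat p = - ((-1 - a - of_nat j') / of_nat p) - 1" using pp by (simp add: field_simps)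
    hence "p_integral p ((a - 0) / of_nat p ^ 1)"
      using pint_diff[OF assms(1) pint_uminus[OF assms(1) j'(2)] pint_int[OF assms(1), of 1]] by simp
    thus False using assms(3) unfolding qcong_def by simp
  qed
  hence C2: "p_integral p (((-1 - a) gchoose (p-1)) / of_nat p)" using pint_gch[OF assms(1) a2, of "p-1" j'] j' p2 by simp
  obtain t where t: "(2*(p-1)) choose (p-1) = p * t" using central_dvd[OF assms(1)] by blast
  have C3: "p_integral p (of_nat ((2*(p-1)) choose (p-1)) / of_nat p)"
    using pint_nat[OF assms(1), of t] pp unfolding t by simp
  have "A a (p-1) / of_nat p ^ 3 = ((a gchoose (p-1)) / of_nat p) * (((-1 - a) gchoose (p-1)) / of_nat p) * (of_nat ((2*(p-1)) choose (p-1)) / of_nat p)"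
    unfolding A_def by (simp add: power3_eq_cube)
  thus ?thesis using pint_mult[OF assms(1) pint_mult[OF assms(1) C1 C2] C3] by simp
qed



lemma tele:
  fixes m :: rat
  assumes "m \<noteq> 0" "F 0 = 0" "\<And>k. F (Suc k) = G k"
  shows "m * (\<Sum>k=0..Suc n. F k / m^k) = (\<Sum>k=0..n. G k / m^k)"
proof (induction n)
  case 0 then show ?case using assms by simp
next
  case (Suc n)
  have "m * (\<Sum>k=0..Suc (Suc n). F k / m^k) = m * (\<Sum>k=0..Suc n. F k / m^k) + m * (F (Suc (Suc n)) / m ^ Suc (Suc n))"
    by (simp add: algebra_simps)
  also have "m * (F (Suc (Suc n)) / m ^ Suc (Suc n)) = G (Suc n) / m ^ Suc n"
    using assms by (simp add: field_simps)
  finally show ?case using Suc by simp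
qed

lemma pint_numeral: assumes "prime p" shows "p_integral p (numeral n)"
  using pint_nat[OF assms, of "numeral n"] by simp

lemma pint_one: assumes "prime p" shows "p_integral p 1"
  using pint_nat[OF assms, of 1] by simp

lemma alg3d:
  fixes d a S0 S1 S2 S3 T :: rat
  assumes "d \<noteq> 0"
  shows "S3 - (((2 - 4 * a * (a + 1)) * d + 12) / d ^ 2 * S1
        - 2 * a * (a + 1) * (d + 12) / d ^ 2 * S0 + 12 * a * (a + 1) / d ^ 2 * T)
   = 2 * inverse d * (d / 2 * S3 - (3 * S2 - (2 * a * (a + 1) - 1) * S1 - a * (a + 1) * S0))
     + 12 * inverse d ^ 2 * (d / 2 * S2 - (S1 - 2 * a * (a + 1) * S0 + a * (a + 1) * T))"
  using assms by (simp add: field_simps power2_eq_square)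

lemma alg3:
  fixes m a S0 S1 S2 S3 T :: rat
  assumes "m - 4 \<noteq> 0"
  shows "S3 - (((2 - 4 * a * (a + 1)) * (m - 4) + 12) / (m - 4) ^ 2 * S1
        - 2 * a * (a + 1) * (m + 8) / (m - 4) ^ 2 * S0 + 12 * a * (a + 1) / (m - 4) ^ 2 * T)
   = 2 * inverse (m - 4) * ((m - 4) / 2 * S3 - (3 * S2 - (2 * a * (a + 1) - 1) * S1 - a * (a + 1) * S0))
     + 12 * inverse (m - 4) ^ 2 * ((m - 4) / 2 * S2 - (S1 - 2 * a * (a + 1) * S0 + a * (a + 1) * T))"
proof -
  have e: "m + 8 = (m - 4) + 12" by simp
  show ?thesis unfolding e by (rule alg3d[OF assms])
qed



theorem theorem3p1:
  fixes p :: nat and a m :: rat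
  assumes "prime p" and "odd p"
    and "p_integral p a" and "p_integral p m"
    and "\<not> qcong p 1 a 0" and "\<not> qcong p 1 a (-1)" and "\<not> qcong p 1 m 0"
  shows "qcong p 3
      ((m - 4) / 2 * (\<Sum>k = 0..p-1. of_nat k ^ 2 * A a k / m ^ k))
      ((\<Sum>k = 0..p-1. of_nat k * A a k / m ^ k)
        - 2 * a * (a + 1) * (\<Sum>k = 0..p-1. A a k / m ^ k)
        + a * (a + 1) * (\<Sum>k = 0..p-2. A a k / (m ^ k * (of_nat k + 1))))
    \<and> qcong p 3
      ((m - 4) / 2 * (\<Sum>k = 0..p-1. of_nat k ^ 3 * A a k / m ^ k))
      (3 * (\<Sum>k = 0..p-1. of_nat k ^ 2 * A a k / m ^ k)
        - (2 * a * (a + 1) - 1) * (\<Sum>k = 0..p-1. of_nat k * A a k / m ^ k)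
        - a * (a + 1) * (\<Sum>k = 0..p-1. A a k / m ^ k))
    \<and> (\<not> qcong p 1 m 4 \<longrightarrow> qcong p 3
      (\<Sum>k = 0..p-1. of_nat k ^ 3 * A a k / m ^ k)
      (((2 - 4 * a * (a + 1)) * (m - 4) + 12) / (m - 4) ^ 2
          * (\<Sum>k = 0..p-1. of_nat k * A a k / m ^ k)
        - 2 * a * (a + 1) * (m + 8) / (m - 4) ^ 2 * (\<Sum>k = 0..p-1. A a k / m ^ k)
        + 12 * a * (a + 1) / (m - 4) ^ 2
          * (\<Sum>k = 0..p-2. A a k / (m ^ k * (of_nat k + 1)))))"
proof -
  note pr = assms(1)
  have p2: "p \<ge> 2" using prime_ge_2_nat[OF pr] .
  have pp: "(of_nat p :: rat) \<noteq> 0" using p2 by simp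
  have m0: "m \<noteq> 0"
  proof
    assume "m = 0"
    hence "qcong p 1 m 0" unfolding qcong_def using pint_int[OF pr, of 0] by simp
    thus False using assms(7) by simp
  qed
  have mnp: "\<not> p_integral p (m / of_nat p)" using assms(7) unfolding qcong_def by simp
  have im: "p_integral p (inverse m)" using pint_inverse[OF pr assms(4) mnp] .
  define N where "N = p - 2"
  have hN: "p - 1 = Suc N" "p - 2 = N" using p2 unfolding N_def by auto
  define b where "b = a * (a + 1)"
  define S0 where "S0 = (\<Sum>k = 0..p-1. A a k / m ^ k)"
  define S1 where "S1 = (\<Sum>k = 0..p-1. of_nat k * A a k / m ^ k)"
  define S2 where "S2 = (\<Sum>k = 0..p-1. of_nat k ^ 2 * A a k / m ^ k)"
  define S3 where "S3 = (\<Sum>k = 0..p-1. of_nat k ^ 3 * A a k / m ^ k)"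
  define T where "T = (\<Sum>k = 0..p-2. A a k / (m ^ k * (of_nat k + 1)))"
  define s0 where "s0 = (\<Sum>k = 0..N. A a k / m ^ k)"
  define s1 where "s1 = (\<Sum>k = 0..N. of_nat k * A a k / m ^ k)"
  define s2 where "s2 = (\<Sum>k = 0..N. of_nat k ^ 2 * A a k / m ^ k)"
  define s3 where "s3 = (\<Sum>k = 0..N. of_nat k ^ 3 * A a k / m ^ k)"
  define X where "X = A a (Suc N) / m ^ Suc N"
  define q :: rat where "q = of_nat (Suc N)"
  have eS0: "S0 = s0 + X" unfolding S0_def s0_def X_def hN by simp
  have eS1: "S1 = s1 + q * X" unfolding S1_def s1_def X_def q_def hN by simp
  have eS2: "S2 = s2 + q^2 * X" unfolding S2_def s2_def X_def q_def hN by simp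
  have eS3: "S3 = s3 + q^3 * X" unfolding S3_def s3_def X_def q_def hN by simp
  have T': "T = (\<Sum>k = 0..N. A a k / (m ^ k * (of_nat k + 1)))" unfolding T_def hN ..
  have k1: "\<And>k. (of_nat k + 1 :: rat) \<noteq> 0" by (metis of_nat_Suc of_nat_eq_0_iff add.commute nat.distinct(1))
  have mk: "\<And>k. m ^ k \<noteq> 0" using m0 by simp
  have id2: "m * S3 = 4 * s3 + 6 * s2 + (2 - 4*b) * s1 - 2*b * s0"
  proof -
    have "m * S3 = m * (\<Sum>k=0..Suc N. of_nat k ^ 3 * A a k / m^k)" unfolding S3_def hN ..
    also have "\<dots> = (\<Sum>k=0..N. (2*(2*of_nat k+1)*((of_nat k)^2 + of_nat k - a*(a+1)) * A a k) / m^k)"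
    proof (rule tele[OF m0])
      fix k
      show "of_nat (Suc k) ^ 3 * A a (Suc k) = 2*(2*of_nat k+1)*((of_nat k)^2 + of_nat k - a*(a+1)) * A a k"
        by (subst of_nat_Suc, subst add.commute, rule A_rec)
    qed simp
    also have "\<dots> = (\<Sum>k=0..N. 4 * (of_nat k ^ 3 * A a k / m ^ k) + 6 * (of_nat k ^ 2 * A a k / m ^ k)
          + (2 - 4*b) * (of_nat k * A a k / m ^ k) - 2*b * (A a k / m ^ k))"
      by (rule sum.cong) (simp_all add: b_def divide_inverse algebra_simps power2_eq_square power3_eq_cube)
    also have "\<dots> = 4 * s3 + 6 * s2 + (2 - 4*b) * s1 - 2*b * s0"
      unfolding s0_def s1_def s2_def s3_def by (simp add: sum.distrib sum_subtractf sum_distrib_left)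
    finally show ?thesis .
  qed
  have id1: "m * S2 = 4 * s2 + 2 * s1 - 4*b * s0 + 2*b*T"
  proof -
    have "m * S2 = m * (\<Sum>k=0..Suc N. of_nat k ^ 2 * A a k / m^k)" unfolding S2_def hN ..
    also have "\<dots> = (\<Sum>k=0..N. ((4 * of_nat k ^ 2 + 2 * of_nat k - 4*b) * A a k + 2*b*(A a k / (of_nat k + 1))) / m^k)"
    proof (rule tele[OF m0])
      fix k
      have "(of_nat k + 1) * ((of_nat k + 1)^2 * A a (Suc k)) = (of_nat k + 1) * ((4 * of_nat k ^ 2 + 2 * of_nat k - 4*b) * A a k + 2*b*(A a k / (of_nat k + 1)))"
      proof -
        have "(of_nat k + 1) * ((of_nat k + 1)^2 * A a (Suc k)) = (of_nat k + 1)^3 * A a (Suc k)"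
          by (simp add: power2_eq_square power3_eq_cube)
        also have "\<dots> = 2*(2*of_nat k+1)*((of_nat k)^2 + of_nat k - a*(a+1)) * A a k" by (rule A_rec)
        also have "\<dots> = (of_nat k + 1) * ((4 * of_nat k ^ 2 + 2 * of_nat k - 4*b) * A a k + 2*b*(A a k / (of_nat k + 1)))"
          using k1[of k] by (simp add: b_def field_simps power2_eq_square)
        finally show ?thesis .
      qed
      hence "(of_nat k + 1)^2 * A a (Suc k) = (4 * of_nat k ^ 2 + 2 * of_nat k - 4*b) * A a k + 2*b*(A a k / (of_nat k + 1))"
        using k1[of k] by simp
      thus "of_nat (Suc k) ^ 2 * A a (Suc k) = (4 * of_nat k ^ 2 + 2 * of_nat k - 4*b) * A a k + 2*b*(A a k / (of_nat k + 1))"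
        by (simp add: add.commute)
    qed simp
    also have "\<dots> = (\<Sum>k=0..N. 4 * (of_nat k ^ 2 * A a k / m ^ k) + 2 * (of_nat k * A a k / m ^ k)
          - 4*b * (A a k / m ^ k) + 2*b * (A a k / (m ^ k * (of_nat k + 1))))"
    proof (rule sum.cong)
      fix k
      have e: "A a k / (m^k*(of_nat k+1)) = A a k * inverse (m^k) * inverse (of_nat k + 1)"
        by (simp only: divide_inverse inverse_mult_distrib mult.assoc)
      show "((4 * of_nat k ^ 2 + 2 * of_nat k - 4*b) * A a k + 2*b*(A a k / (of_nat k + 1))) / m^k =
         4 * (of_nat k ^ 2 * A a k / m ^ k) + 2 * (of_nat k * A a k / m ^ k)
          - 4*b * (A a k / m ^ k) + 2*b * (A a k / (m ^ k * (of_nat k + 1)))"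
        unfolding e by (simp add: divide_inverse algebra_simps)
    qed simp
    also have "\<dots> = 4 * s2 + 2 * s1 - 4*b * s0 + 2*b*T"
      unfolding s0_def s1_def s2_def T' by (simp add: sum.distrib sum_subtractf sum_distrib_left)
    finally show ?thesis .
  qed
  define c1 where "c1 = - 2 * q^2 - q + 2*b"
  define c2 where "c2 = - 2 * q^3 - 3 * q^2 + (2*b - 1) * q + b"
  have D1: "(m - 4) / 2 * S2 - (S1 - 2 * a * (a + 1) * S0 + a * (a + 1) * T) = c1 * X"
  proof -
    have "(m - 4) / 2 * S2 - (S1 - 2 * a * (a + 1) * S0 + a * (a + 1) * T) - c1 * X
        = (1/2) * (m * S2 - (4 * s2 + 2 * s1 - 4*b * s0 + 2*b*T))"
      unfolding eS0 eS1 eS2 c1_def b_def by (simp add: field_simps power2_eq_square)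
    also have "\<dots> = 0" using id1 by simp
    finally show ?thesis by simp
  qed
  have D2: "(m - 4) / 2 * S3 - (3 * S2 - (2 * a * (a + 1) - 1) * S1 - a * (a + 1) * S0) = c2 * X"
  proof -
    have "(m - 4) / 2 * S3 - (3 * S2 - (2 * a * (a + 1) - 1) * S1 - a * (a + 1) * S0) - c2 * X
        = (1/2) * (m * S3 - (4 * s3 + 6 * s2 + (2 - 4*b) * s1 - 2*b * s0))"
      unfolding eS0 eS1 eS2 eS3 c2_def b_def by (simp add: field_simps power2_eq_square power3_eq_cube)
    also have "\<dots> = 0" using id2 by simp
    finally show ?thesis by simp
  qed
  have Xp: "p_integral p (X / of_nat p ^ 3)"
  proof -
    have "X / of_nat p ^ 3 = (A a (p-1) / of_nat p ^ 3) * inverse m ^ Suc N"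
      unfolding X_def hN by (simp add: divide_inverse power_inverse mult_ac)
    thus ?thesis using pint_mult[OF pr A_div[OF pr assms(3,5,6)] pint_power[OF pr im]] by (simp only:)
  qed
  have pq: "p_integral p q" unfolding q_def by (rule pint_nat[OF pr])
  have pb: "p_integral p b" unfolding b_def
    by (intro pint_mult[OF pr] pint_add[OF pr] assms(3) pint_one[OF pr])
  have pc1: "p_integral p c1" unfolding c1_def
    by (intro pint_add[OF pr] pint_diff[OF pr] pint_mult[OF pr] pint_uminus[OF pr] pint_power[OF pr]
        pint_numeral[OF pr] pq pb)
  have pc2: "p_integral p c2" unfolding c2_def
    by (intro pint_add[OF pr] pint_diff[OF pr] pint_mult[OF pr] pint_uminus[OF pr] pint_power[OF pr]
        pint_numeral[OF pr] pint_one[OF pr] pq pb)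
  have Q1: "p_integral p (((m - 4) / 2 * S2 - (S1 - 2 * a * (a + 1) * S0 + a * (a + 1) * T)) / of_nat p ^ 3)"
    unfolding D1 using pint_mult[OF pr pc1 Xp] by (simp add: mult.assoc)
  have Q2: "p_integral p (((m - 4) / 2 * S3 - (3 * S2 - (2 * a * (a + 1) - 1) * S1 - a * (a + 1) * S0)) / of_nat p ^ 3)"
    unfolding D2 using pint_mult[OF pr pc2 Xp] by (simp add: mult.assoc)
  have G1: "qcong p 3 ((m - 4) / 2 * S2) (S1 - 2 * a * (a + 1) * S0 + a * (a + 1) * T)"
    unfolding qcong_def using Q1 by simp
  have G2: "qcong p 3 ((m - 4) / 2 * S3) (3 * S2 - (2 * a * (a + 1) - 1) * S1 - a * (a + 1) * S0)"
    unfolding qcong_def using Q2 by simp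
  have G3: "qcong p 3 S3 (((2 - 4 * a * (a + 1)) * (m - 4) + 12) / (m - 4) ^ 2 * S1
        - 2 * a * (a + 1) * (m + 8) / (m - 4) ^ 2 * S0 + 12 * a * (a + 1) / (m - 4) ^ 2 * T)"
    if m4: "\<not> qcong p 1 m 4"
  proof -
    have m4p: "\<not> p_integral p ((m - 4) / of_nat p)" using m4 unfolding qcong_def by simp
    have m40: "m - 4 \<noteq> 0"
    proof
      assume "m - 4 = 0"
      thus False using m4p pint_int[OF pr, of 0] by simp
    qed
    have pm4: "p_integral p (m - 4)" using pint_diff[OF pr assms(4) pint_numeral[OF pr]] .
    have i4: "p_integral p (inverse (m - 4))" by (rule pint_inverse[OF pr pm4 m4p])
    let ?E1 = "(m - 4) / 2 * S2 - (S1 - 2 * a * (a + 1) * S0 + a * (a + 1) * T)"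
    let ?E2 = "(m - 4) / 2 * S3 - (3 * S2 - (2 * a * (a + 1) - 1) * S1 - a * (a + 1) * S0)"
    have "(S3 - (((2 - 4 * a * (a + 1)) * (m - 4) + 12) / (m - 4) ^ 2 * S1
        - 2 * a * (a + 1) * (m + 8) / (m - 4) ^ 2 * S0 + 12 * a * (a + 1) / (m - 4) ^ 2 * T)) / of_nat p ^ 3
        = (2 * inverse (m - 4) * ?E2 + 12 * inverse (m - 4) ^ 2 * ?E1) / of_nat p ^ 3"
      by (subst alg3[OF m40]) (rule refl)
    also have "\<dots> = (2 * inverse (m - 4)) * (?E2 / of_nat p ^ 3) + (12 * inverse (m - 4) ^ 2) * (?E1 / of_nat p ^ 3)"
      by (simp add: add_divide_distrib)
    finally have e: "(S3 - (((2 - 4 * a * (a + 1)) * (m - 4) + 12) / (m - 4) ^ 2 * S1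
        - 2 * a * (a + 1) * (m + 8) / (m - 4) ^ 2 * S0 + 12 * a * (a + 1) / (m - 4) ^ 2 * T)) / of_nat p ^ 3
        = (2 * inverse (m - 4)) * (?E2 / of_nat p ^ 3) + (12 * inverse (m - 4) ^ 2) * (?E1 / of_nat p ^ 3)" .
    have "p_integral p ((2 * inverse (m - 4)) * (?E2 / of_nat p ^ 3) + (12 * inverse (m - 4) ^ 2) * (?E1 / of_nat p ^ 3))"
      by (intro pint_add[OF pr] pint_mult[OF pr] pint_power[OF pr] pint_numeral[OF pr] i4 Q1 Q2)
    thus ?thesis unfolding qcong_def e[symmetric] by simp
  qed
  show ?thesis
    using G1 G2 G3 unfolding S0_def S1_def S2_def S3_def T_def by blast
qed

end
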